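(* Let $0<\lambda\le\lambda_0$. Let $\boldsymbol\alpha_0^\star$ be the optimal solution of $\max_{\boldsymbol\alpha\ge\mathbf0}D_{\lambda_0}(\boldsymbol\alpha)$, and let $\boldsymbol\alpha_0\in\mathbb R^{2nK}_{\ge0}$ and $\epsilon\ge0$ satisfy $\|\boldsymbol\alpha_0-\boldsymbol\alpha_0^\star\|_2\le\epsilon$. Let $\mathbf m^\star$ be the optimal solution of $\min_{\mathbf m\ge\mathbf0}P_\lambda(\mathbf m)$. For $k\in[p]$ let $$a=\sum_{i\in[n]}\sum_{l\in\mathcal D_i}(\alpha_0)_{il}\max\{x_{l,k},x_{i,k}\}^2,\qquad b=\sqrt{\sum_{i\in[n]}\Big[\sum_{l\in\mathcal D_i}\max\{x_{i,k},x_{l,k}\}^4+\sum_{j\in\mathcal S_i}\max\{x_{i,k},x_{j,k}\}^4\Big]},$$ $$\lambda'_a=\frac{\lambda_0(2\epsilon b+\|\boldsymbol\alpha_0\|_2b+a)}{2\lambda_0+\|\boldsymbol\alpha_0\|_2b-a}.$$ If $\lambda'_a\le\lambda\le\lambda_0$, then $m^\star_{k'}=0$ for every descendant $k'\supseteq k$.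
   Context: Let $n,K,p\ge1$ be integers, $[n]=\{1,\dots,n\}$. For each $i\in[n]$ let $\mathbf x_i=(x_{i,1},\dots,x_{i,p})^\top\in\mathbb R^p$ have nonnegative entries and let $\mathcal D_i,\mathcal S_i\subseteq[n]$ be sets of size $K$. Put $\mathbf c_{ij}=(\mathbf x_i-\mathbf x_j)\circ(\mathbf x_i-\mathbf x_j)$ (entrywise product). Vectors in $\mathbb R^{2nK}$ are indexed by the pairs $(i,l)$, $l\in\mathcal D_i$ ("different-class pairs") and $(i,j)$, $j\in\mathcal S_i$ ("same-class pairs"); $\boldsymbol\alpha_0$ has entries $(\alpha_0)_{il},(\alpha_0)_{ij}$. $\mathbf C\in\mathbb R^{p\times2nK}$ has column $\mathbf c_{il}$ for each different-class pair and $-\mathbf c_{ij}$ for each same-class pair. Fix $L\ge U\ge0$, $\eta>0$; let $\mathbf t\in\mathbb R^{2nK}$ have entry $L$ at different-class pairs and $-U$ at same-class pairs; $\ell_s(x)=([s-x]_+)^2$ with $[z]_+=\max\{z,0\}$ (entrywise for vectors); $\mathbf1$ is the all-ones vector. For $\lambda>0$, $$P_\lambda(\mathbf m)=\sum_{i\in[n]}\Big[\sum_{l\in\mathcal D_i}\ell_L(\mathbf m^\top\mathbf c_{il})+\sum_{j\in\mathcal S_i}\ell_{-U}(-\mathbf m^\top\mathbf c_{ij})\Big]+\lambda\Big(\mathbf m^\top\mathbf1+\frac\eta2\|\mathbf m\|_2^2\Big)\ (\mathbf m\in\mathbb R^p_{\ge0}),$$ $$D_\lambda(\boldsymbol\alpha)=-\frac14\|\boldsymbol\alpha\|_2^2+\mathbf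 t^\top\boldsymbol\alpha-\frac{\lambda\eta}2\Big\|\frac1{\lambda\eta}[\mathbf C\boldsymbol\alpha-\lambda\mathbf1]_+\Big\|_2^2\ (\boldsymbol\alpha\in\mathbb R^{2nK}_{\ge0}).$$ The feature indices $[p]$ are nodes of a rooted graph-mining tree: $x_{i,k}=g(\#(H_k\sqsubseteq G_i))$, where $H_k$ is the subgraph at node $k$, $G_i$ the $i$-th input graph, $\#(H\sqsubseteq G)$ the number of non-overlapping occurrences of $H$ in $G$, $g$ nonnegative and nondecreasing, and each node's subgraph is contained in its children's subgraphs. Write $k'\supseteq k$ if $k'$ is a descendant of $k$; in particular $0\le x_{i,k'}\le x_{i,k}$ for all $i$ whenever $k'\supseteq k$. *)

theory Defs
  imports Complex_Main
begin

text \<open>Data: x i k is the k-th feature of the i-th input (i in {1..n}, k in {1..p}).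
  D i (different-class neighbours) and S i (same-class neighbours) are subsets of {1..n}.
  Dual vectors in R^{2nK} are functions on the tagged index set pair_idx:
  (True, i, l) for l in D i  and  (False, i, j) for j in S i.\<close>

definition pair_idx :: "nat \<Rightarrow> (nat \<Rightarrow> nat set) \<Rightarrow> (nat \<Rightarrow> nat set) \<Rightarrow> (bool \<times> nat \<times> nat) set" where
  "pair_idx n D S =
     (\<lambda>(i,l). (True,i,l)) ` (SIGMA i:{1..n}. D i) \<union> (\<lambda>(i,j). (False,i,j)) ` (SIGMA i:{1..n}. S i)"

definition cvec :: "(nat \<Rightarrow> nat \<Rightarrow> real) \<Rightarrow> nat \<Rightarrow> nat \<Rightarrow> nat \<Rightarrow> real" where
  "cvec x i j k = (x i k - x j k) * (x i k - x j k)"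

definition pos_part :: "real \<Rightarrow> real" where
  "pos_part z = max z 0"

definition ell :: "real \<Rightarrow> real \<Rightarrow> real" where
  "ell s z = (pos_part (s - z))\<^sup>2"

definition mdot :: "nat \<Rightarrow> (nat \<Rightarrow> real) \<Rightarrow> (nat \<Rightarrow> nat \<Rightarrow> real) \<Rightarrow> nat \<Rightarrow> nat \<Rightarrow> real" where
  "mdot p m x i j = (\<Sum>k\<in>{1..p}. m k * cvec x i j k)"

definition Pobj :: "nat \<Rightarrow> nat \<Rightarrow> (nat \<Rightarrow> nat \<Rightarrow> real) \<Rightarrow> (nat \<Rightarrow> nat set) \<Rightarrow> (nat \<Rightarrow> nat set)
     \<Rightarrow> real \<Rightarrow> real \<Rightarrow> real \<Rightarrow> real \<Rightarrow> (nat \<Rightarrow> real) \<Rightarrow> real" where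
  "Pobj n p x D S L U \<eta> lam m =
     (\<Sum>i\<in>{1..n}. (\<Sum>l\<in>D i. ell L (mdot p m x i l)) + (\<Sum>j\<in>S i. ell (- U) (- mdot p m x i j)))
     + lam * ((\<Sum>k\<in>{1..p}. m k) + \<eta> / 2 * (\<Sum>k\<in>{1..p}. (m k)\<^sup>2))"

definition tvec :: "real \<Rightarrow> real \<Rightarrow> bool \<times> nat \<times> nat \<Rightarrow> real" where
  "tvec L U q = (if fst q then L else - U)"

definition Ccol :: "(nat \<Rightarrow> nat \<Rightarrow> real) \<Rightarrow> bool \<times> nat \<times> nat \<Rightarrow> nat \<Rightarrow> real" where
  "Ccol x q k = (case q of (b, i, j) \<Rightarrow> (if b then cvec x i j k else - cvec x i j k))"

definition Cmul :: "nat \<Rightarrow> (nat \<Rightarrow> nat \<Rightarrow> real) \<Rightarrow> (nat \<Rightarrow> nat set) \<Rightarrow> (nat \<Rightarrow> nat set)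
     \<Rightarrow> (bool \<times> nat \<times> nat \<Rightarrow> real) \<Rightarrow> nat \<Rightarrow> real" where
  "Cmul n x D S \<alpha> k = (\<Sum>q\<in>pair_idx n D S. Ccol x q k * \<alpha> q)"

definition dnorm :: "nat \<Rightarrow> (nat \<Rightarrow> nat set) \<Rightarrow> (nat \<Rightarrow> nat set) \<Rightarrow> (bool \<times> nat \<times> nat \<Rightarrow> real) \<Rightarrow> real" where
  "dnorm n D S \<alpha> = sqrt (\<Sum>q\<in>pair_idx n D S. (\<alpha> q)\<^sup>2)"

definition Dobj :: "nat \<Rightarrow> nat \<Rightarrow> (nat \<Rightarrow> nat \<Rightarrow> real) \<Rightarrow> (nat \<Rightarrow> nat set) \<Rightarrow> (nat \<Rightarrow> nat set)
     \<Rightarrow> real \<Rightarrow> real \<Rightarrow> real \<Rightarrow> real \<Rightarrow> (bool \<times> nat \<times> nat \<Rightarrow> real) \<Rightarrow> real" where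
  "Dobj n p x D S L U \<eta> lam \<alpha> =
     - 1/4 * (dnorm n D S \<alpha>)\<^sup>2 + (\<Sum>q\<in>pair_idx n D S. tvec L U q * \<alpha> q)
     - lam * \<eta> / 2 * (\<Sum>k\<in>{1..p}. (1 / (lam * \<eta>) * pos_part (Cmul n x D S \<alpha> k - lam))\<^sup>2)"

definition dual_feasible :: "nat \<Rightarrow> (nat \<Rightarrow> nat set) \<Rightarrow> (nat \<Rightarrow> nat set) \<Rightarrow> (bool \<times> nat \<times> nat \<Rightarrow> real) \<Rightarrow> bool" where
  "dual_feasible n D S \<alpha> \<longleftrightarrow> (\<forall>q\<in>pair_idx n D S. 0 \<le> \<alpha> q) \<and> (\<forall>q. q \<notin> pair_idx n D S \<longrightarrow> \<alpha> q = 0)"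

definition primal_feasible :: "nat \<Rightarrow> (nat \<Rightarrow> real) \<Rightarrow> bool" where
  "primal_feasible p m \<longleftrightarrow> (\<forall>k\<in>{1..p}. 0 \<le> m k) \<and> (\<forall>k. k \<notin> {1..p} \<longrightarrow> m k = 0)"

end

theory Submission
  imports Defs "HOL-Analysis.L2_Norm"
begin


lemma pp_sq_upper: "(pos_part (z + d))\<^sup>2 \<le> (pos_part z)\<^sup>2 + 2 * pos_part z * d + d\<^sup>2"
proof (cases "z \<ge> 0"; cases "z + d \<ge> 0")
  assume "0 \<le> z" "\<not> 0 \<le> z + d"
  then show ?thesis unfolding pos_part_def
    using zero_le_power2[of "z+d"] by (simp add: power2_eq_square algebra_simps)
next
  assume a: "\<not> 0 \<le> z" "0 \<le> z + d"
  have "z * (z + 2*d) \<le> 0" using a by (intro mult_nonpos_nonneg) auto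
  then show ?thesis using a unfolding pos_part_def by (simp add: power2_eq_square algebra_simps)
qed (auto simp: pos_part_def power2_eq_square algebra_simps)

lemma small_le0:
  fixes G B c :: real
  assumes "c > 0" "B \<ge> 0" "\<And>s. 0 < s \<Longrightarrow> s < c \<Longrightarrow> G \<le> s * B"
  shows "G \<le> 0"
proof (rule ccontr)
  assume G: "\<not> G \<le> 0"
  define s where "s = min (c/2) (G / (2*(B+1)))"
  have "G / (2*(B+1)) > 0" using G assms by simp
  moreover have "s \<le> c/2" unfolding s_def by (rule min.cobounded1)
  ultimately have s0: "0 < s" "s < c" using assms by (auto simp: s_def)
  have "s * B \<le> G/(2*(B+1)) * B" unfolding s_def using assms by (intro mult_right_mono) auto
  also have "\<dots> < G"
  proof -
    have "0 \<le> B*G" using G assms by simp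
    then have "0 < B * G + G * 2" using G by linarith
    then show ?thesis using G assms by (simp add: field_simps)
  qed
  finally show False using assms(3)[OF s0] by simp
qed

lemma sum_pair:
  assumes "\<And>i. i \<in> {1..n} \<Longrightarrow> finite (D i)" "\<And>i. i \<in> {1..n} \<Longrightarrow> finite (S i)"
  shows "sum f (pair_idx n D S) = (\<Sum>i\<in>{1..n}. (\<Sum>l\<in>D i. f (True,i,l)) + (\<Sum>j\<in>S i. f (False,i,j)))"
proof -
  have fin1: "finite (SIGMA i:{1..n}. D i)" "finite (SIGMA i:{1..n}. S i)" using assms by auto
  have inj: "inj_on (\<lambda>(i,l). (True,i,l)) A" "inj_on (\<lambda>(i,l). (False,i,l)) B" for A B
    by (auto simp: inj_on_def)
  have "sum f (pair_idx n D S) = sum f ((\<lambda>(i,l). (True,i,l)) ` (SIGMA i:{1..n}. D i))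
      + sum f ((\<lambda>(i,j). (False,i,j)) ` (SIGMA i:{1..n}. S i))"
    unfolding pair_idx_def by (rule sum.union_disjoint) (use fin1 in auto)
  also have "sum f ((\<lambda>(i,l). (True,i,l)) ` (SIGMA i:{1..n}. D i)) = (\<Sum>(i,l)\<in>(SIGMA i:{1..n}. D i). f (True,i,l))"
    by (subst sum.reindex[OF inj(1)]) (simp add: split_def)
  also have "\<dots> = (\<Sum>i\<in>{1..n}. \<Sum>l\<in>D i. f (True,i,l))"
    by (rule sum.Sigma[symmetric]) (use assms in auto)
  also have "sum f ((\<lambda>(i,l). (False,i,l)) ` (SIGMA i:{1..n}. S i)) = (\<Sum>(i,l)\<in>(SIGMA i:{1..n}. S i). f (False,i,l))"
    by (subst sum.reindex[OF inj(2)]) (simp add: split_def)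
  also have "\<dots> = (\<Sum>i\<in>{1..n}. \<Sum>l\<in>S i. f (False,i,l))"
    by (rule sum.Sigma[symmetric]) (use assms in auto)
  finally show ?thesis by (simp add: sum.distrib)
qed




lemma primal_pert:
  fixes Q :: "'q set" and Ks :: "nat set" and A :: "'q \<Rightarrow> nat \<Rightarrow> real" and t :: "'q \<Rightarrow> real"
  assumes fin: "finite Q" "finite Ks" and k: "k \<in> Ks"
  shows "(\<Sum>q\<in>Q. (pos_part (t q - (\<Sum>j\<in>Ks. (ms j + (if j = k then s else 0)) * A q j)))\<^sup>2)
     + lam * ((\<Sum>j\<in>Ks. ms j + (if j = k then s else 0)) + \<eta>/2 * (\<Sum>j\<in>Ks. (ms j + (if j = k then s else 0))\<^sup>2))
   \<le> (\<Sum>q\<in>Q. (pos_part (t q - (\<Sum>j\<in>Ks. ms j * A q j)))\<^sup>2)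
     + lam * ((\<Sum>j\<in>Ks. ms j) + \<eta>/2 * (\<Sum>j\<in>Ks. (ms j)\<^sup>2))
     + s * (lam * (1 + \<eta> * ms k) - (\<Sum>q\<in>Q. A q k * (2 * pos_part (t q - (\<Sum>j\<in>Ks. ms j * A q j)))))
     + s\<^sup>2 * ((\<Sum>q\<in>Q. (A q k)\<^sup>2) + lam * \<eta> / 2)"
proof -
  define z where "z q = t q - (\<Sum>j\<in>Ks. ms j * A q j)" for q
  have e1: "(\<Sum>j\<in>Ks. (ms j + (if j = k then s else 0)) * A q j) = (\<Sum>j\<in>Ks. ms j * A q j) + s * A q k" for q
  proof -
    have "(\<Sum>j\<in>Ks. (ms j + (if j = k then s else 0)) * A q j) = (\<Sum>j\<in>Ks. ms j * A q j + (if j = k then s * A q k else 0))"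
      by (rule sum.cong) (auto simp: algebra_simps)
    also have "\<dots> = (\<Sum>j\<in>Ks. ms j * A q j) + s * A q k" using fin k by (simp add: sum.distrib)
    finally show ?thesis .
  qed
  have e2: "(\<Sum>j\<in>Ks. ms j + (if j = k then s else 0)) = (\<Sum>j\<in>Ks. ms j) + s"
    using fin k by (simp add: sum.distrib)
  have e3: "(\<Sum>j\<in>Ks. (ms j + (if j = k then s else 0))\<^sup>2) = (\<Sum>j\<in>Ks. (ms j)\<^sup>2) + (2 * s * ms k + s\<^sup>2)"
  proof -
    have "(\<Sum>j\<in>Ks. (ms j + (if j = k then s else 0))\<^sup>2) = (\<Sum>j\<in>Ks. (ms j)\<^sup>2 + (if j = k then 2 * s * ms k + s\<^sup>2 else 0))"
      by (rule sum.cong) (auto simp: power2_eq_square algebra_simps)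
    also have "\<dots> = (\<Sum>j\<in>Ks. (ms j)\<^sup>2) + (2 * s * ms k + s\<^sup>2)" using fin k by (simp add: sum.distrib)
    finally show ?thesis .
  qed
  have e4: "(pos_part (z q - s * A q k))\<^sup>2 \<le> (pos_part (z q))\<^sup>2 + 2 * pos_part (z q) * (- s * A q k) + (s * A q k)\<^sup>2" for q
    using pp_sq_upper[of "z q" "- s * A q k"] by simp
  have "(\<Sum>q\<in>Q. (pos_part (z q - s * A q k))\<^sup>2) \<le> (\<Sum>q\<in>Q. (pos_part (z q))\<^sup>2 + 2 * pos_part (z q) * (- s * A q k) + (s * A q k)\<^sup>2)"
    by (rule sum_mono) (rule e4)
  also have "\<dots> = (\<Sum>q\<in>Q. (pos_part (z q))\<^sup>2) - s * (\<Sum>q\<in>Q. A q k * (2 * pos_part (z q))) + s\<^sup>2 * (\<Sum>q\<in>Q. (A q k)\<^sup>2)"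
    by (simp add: sum.distrib sum_subtractf sum_distrib_left power_mult_distrib algebra_simps)
  finally have L: "(\<Sum>q\<in>Q. (pos_part (z q - s * A q k))\<^sup>2) \<le> (\<Sum>q\<in>Q. (pos_part (z q))\<^sup>2) - s * (\<Sum>q\<in>Q. A q k * (2 * pos_part (z q))) + s\<^sup>2 * (\<Sum>q\<in>Q. (A q k)\<^sup>2)" .
  have e5: "(\<Sum>q\<in>Q. (pos_part (t q - ((\<Sum>j\<in>Ks. ms j * A q j) + s * A q k)))\<^sup>2) = (\<Sum>q\<in>Q. (pos_part (z q - s * A q k))\<^sup>2)"
    unfolding z_def by (simp add: diff_diff_eq)
  have e6: "lam * ((\<Sum>j\<in>Ks. ms j) + s + \<eta>/2 * ((\<Sum>j\<in>Ks. (ms j)\<^sup>2) + (2 * s * ms k + s\<^sup>2)))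
     = lam * ((\<Sum>j\<in>Ks. ms j) + \<eta>/2 * (\<Sum>j\<in>Ks. (ms j)\<^sup>2)) + s * (lam * (1 + \<eta> * ms k)) + s\<^sup>2 * (lam * \<eta> / 2)"
    by (simp add: algebra_simps)
  show ?thesis
    unfolding e1 e2 e3 e5 e6 using L unfolding z_def[symmetric] by (simp add: right_diff_distrib distrib_left)
qed




lemma primal_kkt:
  fixes Q :: "'q set" and Ks :: "nat set" and A :: "'q \<Rightarrow> nat \<Rightarrow> real" and t :: "'q \<Rightarrow> real" and lam \<eta> :: real and ms :: "nat \<Rightarrow> real"
  defines "Pg \<equiv> \<lambda>m. (\<Sum>q\<in>Q. (pos_part (t q - (\<Sum>j\<in>Ks. m j * A q j)))\<^sup>2) + lam * ((\<Sum>j\<in>Ks. m j) + \<eta>/2 * (\<Sum>j\<in>Ks. (m j)\<^sup>2))"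
  assumes fin: "finite Q" "finite Ks" and k: "k \<in> Ks" and lam: "lam > 0" and eta: "\<eta> > 0"
    and ms_nn: "\<forall>j\<in>Ks. 0 \<le> ms j" and ms_z: "\<forall>j. j \<notin> Ks \<longrightarrow> ms j = 0"
    and opt: "\<And>m. (\<forall>j\<in>Ks. 0 \<le> m j) \<Longrightarrow> (\<forall>j. j \<notin> Ks \<longrightarrow> m j = 0) \<Longrightarrow> Pg ms \<le> Pg m"
  shows "(\<Sum>q\<in>Q. A q k * (2 * pos_part (t q - (\<Sum>j\<in>Ks. ms j * A q j)))) \<le> lam * (1 + \<eta> * ms k)"
    and "ms k > 0 \<Longrightarrow> (\<Sum>q\<in>Q. A q k * (2 * pos_part (t q - (\<Sum>j\<in>Ks. ms j * A q j)))) \<ge> lam * (1 + \<eta> * ms k)"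
proof -
  define G where "G = lam * (1 + \<eta> * ms k) - (\<Sum>q\<in>Q. A q k * (2 * pos_part (t q - (\<Sum>j\<in>Ks. ms j * A q j))))"
  define B where "B = (\<Sum>q\<in>Q. (A q k)\<^sup>2) + lam * \<eta> / 2"
  have B0: "B \<ge> 0" unfolding B_def using lam eta by (simp add: sum_nonneg)
  have main: "0 \<le> s * G + s\<^sup>2 * B" if "ms k + s \<ge> 0" for s
  proof -
    define m' where "m' = (\<lambda>j. ms j + (if j = k then s else 0))"
    have "Pg ms \<le> Pg m'"
      by (rule opt) (use that ms_nn ms_z k in \<open>auto simp: m'_def\<close>)
    moreover have "Pg m' \<le> Pg ms + s * G + s\<^sup>2 * B"
      unfolding Pg_def m'_def G_def B_def by (rule primal_pert[OF fin k])
    ultimately show ?thesis by linarith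
  qed
  have "- G \<le> 0"
  proof (rule small_le0[of 1 B])
    fix s :: real assume s: "0 < s" "s < 1"
    have "0 \<le> s * G + s\<^sup>2 * B" by (rule main) (use s ms_nn k in auto)
    then have "0 \<le> s * (G + s * B)" by (simp add: power2_eq_square algebra_simps)
    then have "0 \<le> G + s * B" using s by (simp add: zero_le_mult_iff)
    then show "- G \<le> s * B" by linarith
  qed (use B0 in auto)
  then show "(\<Sum>q\<in>Q. A q k * (2 * pos_part (t q - (\<Sum>j\<in>Ks. ms j * A q j)))) \<le> lam * (1 + \<eta> * ms k)"
    unfolding G_def by linarith
  assume pos: "ms k > 0"
  have "G \<le> 0"
  proof (rule small_le0[of "ms k" B])
    fix u :: real assume u: "0 < u" "u < ms k"
    have "0 \<le> (-u) * G + (-u)\<^sup>2 * B" by (rule main) (use u in auto)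
    then have "0 \<le> u * (s * B - G)" if "s = u" for s using that by (simp add: power2_eq_square algebra_simps)
    then have "0 \<le> u * (u * B - G)" by simp
    then have "0 \<le> u * B - G" using u by (simp add: zero_le_mult_iff)
    then show "G \<le> u * B" by linarith
  qed (use B0 pos in auto)
  then show "(\<Sum>q\<in>Q. A q k * (2 * pos_part (t q - (\<Sum>j\<in>Ks. ms j * A q j)))) \<ge> lam * (1 + \<eta> * ms k)"
    unfolding G_def by linarith
qed




lemma dual_vi:
  fixes Q :: "'q set" and Ks :: "nat set" and A :: "'q \<Rightarrow> nat \<Rightarrow> real" and t :: "'q \<Rightarrow> real"
    and lam0 \<eta> :: real and a0 \<beta> :: "'q \<Rightarrow> real"
  defines "Dg \<equiv> \<lambda>\<alpha>. - 1/4 * (\<Sum>q\<in>Q. (\<alpha> q)\<^sup>2) + (\<Sum>q\<in>Q. t q * \<alpha> q)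
      - 1 / (2 * lam0 * \<eta>) * (\<Sum>k\<in>Ks. (pos_part ((\<Sum>q\<in>Q. A q k * \<alpha> q) - lam0))\<^sup>2)"
  assumes fin: "finite Q" "finite Ks" and lam: "lam0 > 0" and eta: "\<eta> > 0"
    and a0_nn: "\<forall>q\<in>Q. 0 \<le> a0 q" and a0_z: "\<forall>q. q \<notin> Q \<longrightarrow> a0 q = 0"
    and b_nn: "\<forall>q\<in>Q. 0 \<le> \<beta> q" and b_z: "\<forall>q. q \<notin> Q \<longrightarrow> \<beta> q = 0"
    and opt: "\<And>\<alpha>. (\<forall>q\<in>Q. 0 \<le> \<alpha> q) \<Longrightarrow> (\<forall>q. q \<notin> Q \<longrightarrow> \<alpha> q = 0) \<Longrightarrow> Dg \<alpha> \<le> Dg a0"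
  shows "(\<Sum>q\<in>Q. (- a0 q / 2 + t q - (\<Sum>k\<in>Ks. A q k * (pos_part ((\<Sum>q'\<in>Q. A q' k * a0 q') - lam0) / (lam0 * \<eta>))))
           * (\<beta> q - a0 q)) \<le> 0"
proof -
  define d where "d q = \<beta> q - a0 q" for q
  define c where "c = 1 / (2 * lam0 * \<eta>)"
  have c0: "c > 0" unfolding c_def using lam eta by simp
  define v where "v k = (\<Sum>q\<in>Q. A q k * a0 q) - lam0" for k
  define w where "w k = (\<Sum>q\<in>Q. A q k * d q)" for k
  define m0 where "m0 k = pos_part ((\<Sum>q'\<in>Q. A q' k * a0 q') - lam0) / (lam0 * \<eta>)" for k
  define Gd where "Gd = (\<Sum>q\<in>Q. (- a0 q / 2 + t q - (\<Sum>k\<in>Ks. A q k * m0 k)) * d q)"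
  define M where "M = (\<Sum>q\<in>Q. (d q)\<^sup>2) / 4 + c * (\<Sum>k\<in>Ks. (w k)\<^sup>2)"
  have M0: "M \<ge> 0" unfolding M_def using c0 by (simp add: sum_nonneg)
  have swap: "(\<Sum>q\<in>Q. (\<Sum>k\<in>Ks. A q k * m0 k) * d q) = (\<Sum>k\<in>Ks. m0 k * w k)"
    unfolding w_def by (simp add: sum_distrib_left sum_distrib_right sum.swap[of _ Q] algebra_simps)
  have m0v: "m0 k = 2 * c * pos_part (v k)" for k
    unfolding m0_def v_def c_def by simp
  have Gd_eq: "Gd = - 1/2 * (\<Sum>q\<in>Q. a0 q * d q) + (\<Sum>q\<in>Q. t q * d q) - 2 * c * (\<Sum>k\<in>Ks. pos_part (v k) * w k)"
  proof -
    have "Gd = (\<Sum>q\<in>Q. - 1/2 * (a0 q * d q) + t q * d q - (\<Sum>k\<in>Ks. A q k * m0 k) * d q)"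
      unfolding Gd_def by (rule sum.cong) (auto simp: algebra_simps)
    also have "\<dots> = - 1/2 * (\<Sum>q\<in>Q. a0 q * d q) + (\<Sum>q\<in>Q. t q * d q) - (\<Sum>k\<in>Ks. m0 k * w k)"
      by (simp add: sum.distrib sum_subtractf sum_distrib_left swap sum_negf)
    also have "(\<Sum>k\<in>Ks. m0 k * w k) = 2 * c * (\<Sum>k\<in>Ks. pos_part (v k) * w k)"
      by (simp add: m0v sum_distrib_left algebra_simps)
    finally show ?thesis .
  qed
  have key: "Dg a0 + s * Gd - s\<^sup>2 * M \<le> Dg (\<lambda>q. a0 q + s * d q)" for s
  proof -
    have T1: "(\<Sum>q\<in>Q. (a0 q + s * d q)\<^sup>2) = (\<Sum>q\<in>Q. (a0 q)\<^sup>2) + 2 * s * (\<Sum>q\<in>Q. a0 q * d q) + s\<^sup>2 * (\<Sum>q\<in>Q. (d q)\<^sup>2)"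
      by (simp add: power2_sum sum.distrib sum_distrib_left power_mult_distrib algebra_simps)
    have T2: "(\<Sum>q\<in>Q. t q * (a0 q + s * d q)) = (\<Sum>q\<in>Q. t q * a0 q) + s * (\<Sum>q\<in>Q. t q * d q)"
      by (simp add: sum.distrib sum_distrib_left algebra_simps)
    have T3a: "(\<Sum>q\<in>Q. A q k * (a0 q + s * d q)) - lam0 = v k + s * w k" for k
      unfolding v_def w_def by (simp add: sum.distrib sum_distrib_left algebra_simps)
    have T3: "(\<Sum>k\<in>Ks. (pos_part ((\<Sum>q\<in>Q. A q k * (a0 q + s * d q)) - lam0))\<^sup>2)
        \<le> (\<Sum>k\<in>Ks. (pos_part (v k))\<^sup>2) + 2 * s * (\<Sum>k\<in>Ks. pos_part (v k) * w k) + s\<^sup>2 * (\<Sum>k\<in>Ks. (w k)\<^sup>2)"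
    proof -
      have "(\<Sum>k\<in>Ks. (pos_part ((\<Sum>q\<in>Q. A q k * (a0 q + s * d q)) - lam0))\<^sup>2)
          \<le> (\<Sum>k\<in>Ks. (pos_part (v k))\<^sup>2 + 2 * pos_part (v k) * (s * w k) + (s * w k)\<^sup>2)"
        unfolding T3a by (rule sum_mono) (rule pp_sq_upper)
      also have "\<dots> = (\<Sum>k\<in>Ks. (pos_part (v k))\<^sup>2) + 2 * s * (\<Sum>k\<in>Ks. pos_part (v k) * w k) + s\<^sup>2 * (\<Sum>k\<in>Ks. (w k)\<^sup>2)"
        by (simp add: sum.distrib sum_distrib_left power_mult_distrib algebra_simps)
      finally show ?thesis .
    qed
    have Dg0: "Dg a0 = - 1/4 * (\<Sum>q\<in>Q. (a0 q)\<^sup>2) + (\<Sum>q\<in>Q. t q * a0 q) - c * (\<Sum>k\<in>Ks. (pos_part (v k))\<^sup>2)"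
      unfolding Dg_def c_def v_def by simp
    have Dgs: "Dg (\<lambda>q. a0 q + s * d q) = - 1/4 * (\<Sum>q\<in>Q. (a0 q + s * d q)\<^sup>2) + (\<Sum>q\<in>Q. t q * (a0 q + s * d q))
       - c * (\<Sum>k\<in>Ks. (pos_part ((\<Sum>q\<in>Q. A q k * (a0 q + s * d q)) - lam0))\<^sup>2)"
      unfolding Dg_def c_def by simp
    have T3c: "c * (\<Sum>k\<in>Ks. (pos_part ((\<Sum>q\<in>Q. A q k * (a0 q + s * d q)) - lam0))\<^sup>2)
        \<le> c * ((\<Sum>k\<in>Ks. (pos_part (v k))\<^sup>2) + 2 * s * (\<Sum>k\<in>Ks. pos_part (v k) * w k) + s\<^sup>2 * (\<Sum>k\<in>Ks. (w k)\<^sup>2))"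
      using T3 c0 by (intro mult_left_mono) auto
    show ?thesis unfolding Dgs T1 T2 Dg0 Gd_eq M_def using T3c
      by (simp add: algebra_simps)
  qed
  have "Gd \<le> 0"
  proof (rule small_le0[of 1 M])
    fix s :: real assume s: "0 < s" "s < 1"
    have "Dg (\<lambda>q. a0 q + s * d q) \<le> Dg a0"
    proof (rule opt)
      show "\<forall>q\<in>Q. 0 \<le> a0 q + s * d q"
      proof
        fix q assume q: "q \<in> Q"
        have "a0 q + s * d q = (1 - s) * a0 q + s * \<beta> q" unfolding d_def by (simp add: algebra_simps)
        also have "\<dots> \<ge> 0" using q a0_nn b_nn s by simp
        finally show "0 \<le> a0 q + s * d q" .
      qed
      show "\<forall>q. q \<notin> Q \<longrightarrow> a0 q + s * d q = 0" using a0_z b_z by (simp add: d_def)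
    qed
    with key[of s] have "s * Gd \<le> s * (s * M)" by (simp add: power2_eq_square)
    then show "Gd \<le> s * M" using s by simp
  qed (use M0 in auto)
  then show ?thesis unfolding Gd_def d_def m0_def .
qed




lemma cross_term:
  fixes ms c0 c1 lam lam0 \<eta> :: real
  assumes "0 < lam" "lam \<le> lam0" "0 < \<eta>" "0 \<le> ms" "c1 \<le> lam * (1 + \<eta> * ms)"
    "ms > 0 \<Longrightarrow> c1 \<ge> lam * (1 + \<eta> * ms)"
  shows "0 \<le> (ms - pos_part (c0 - lam0) / (lam0 * \<eta>)) * (lam0 * c1 - lam * c0)"
proof -
  define b where "b = c0 - lam0"
  define X where "X = lam0 * \<eta> * ms"
  have l0: "lam0 * \<eta> > 0" using assms by simp
  show ?thesis
  proof (cases "ms > 0")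
    case True
    then have c1: "c1 = lam * (1 + \<eta> * ms)" using assms by (meson order_antisym)
    have X0: "X \<ge> 0" unfolding X_def using assms by simp
    have f1: "ms - pos_part (c0 - lam0) / (lam0 * \<eta>) = (X - pos_part b) / (lam0 * \<eta>)"
      unfolding X_def b_def using l0 assms by (simp add: diff_divide_distrib)
    have f2: "lam0 * c1 - lam * c0 = lam * (X - b)"
      unfolding c1 X_def b_def by (simp add: algebra_simps)
    have "0 \<le> (X - pos_part b) * (X - b)"
      using X0 by (cases "b \<le> 0") (auto simp: pos_part_def max_def)
    then have "0 \<le> (X - pos_part b) * (X - b) * (lam / (lam0 * \<eta>))"
      using l0 assms by simp
    then show ?thesis unfolding f1 f2 by (simp add: field_simps)
  next
    case False
    then have ms0: "ms = 0" using assms by simp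
    show ?thesis
    proof (cases "b \<le> 0")
      case True
      then show ?thesis unfolding ms0 b_def[symmetric] by (simp add: pos_part_def)
    next
      case False
      have "lam0 * c1 \<le> lam0 * lam" using assms ms0 by simp
      moreover have "lam * c0 > lam * lam0" using False assms unfolding b_def by simp
      ultimately have "lam0 * c1 - lam * c0 \<le> 0" by (simp add: mult.commute)
      moreover have "pos_part b / (lam0 * \<eta>) \<ge> 0" using l0 by (simp add: pos_part_def)
      ultimately have "0 \<le> (- (pos_part b / (lam0 * \<eta>))) * (lam0 * c1 - lam * c0)"
        by (intro mult_nonpos_nonpos) auto
      then show ?thesis unfolding ms0 b_def[symmetric] by simp
    qed
  qed
qed




lemma rpb:
  fixes Q :: "'q set" and Ks :: "nat set" and A :: "'q \<Rightarrow> nat \<Rightarrow> real" and t :: "'q \<Rightarrow> real"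
    and lam lam0 \<eta> :: real and a0 a1 :: "'q \<Rightarrow> real" and ms :: "nat \<Rightarrow> real"
  assumes fin: "finite Q" "finite Ks" and lam: "0 < lam" "lam \<le> lam0" and eta: "0 < \<eta>"
    and a0_nn: "\<forall>q\<in>Q. 0 \<le> a0 q"
    and vi0: "(\<Sum>q\<in>Q. (- a0 q / 2 + t q - (\<Sum>k\<in>Ks. A q k * (pos_part ((\<Sum>q'\<in>Q. A q' k * a0 q') - lam0) / (lam0 * \<eta>))))
           * ((lam0 / lam) * a1 q - a0 q)) \<le> 0"
    and a1_def: "\<forall>q\<in>Q. a1 q = 2 * pos_part (t q - (\<Sum>j\<in>Ks. ms j * A q j))"
    and ms_nn: "\<forall>k\<in>Ks. 0 \<le> ms k"
    and kkt1: "\<forall>k\<in>Ks. (\<Sum>q\<in>Q. A q k * a1 q) \<le> lam * (1 + \<eta> * ms k)"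
    and kkt2: "\<forall>k\<in>Ks. ms k > 0 \<longrightarrow> (\<Sum>q\<in>Q. A q k * a1 q) \<ge> lam * (1 + \<eta> * ms k)"
  shows "(\<Sum>q\<in>Q. (a1 q - (lam0 + lam) / (2 * lam0) * a0 q)\<^sup>2) \<le> ((lam0 - lam) / (2 * lam0))\<^sup>2 * (\<Sum>q\<in>Q. (a0 q)\<^sup>2)"
proof -
  define m0 where "m0 k = pos_part ((\<Sum>q'\<in>Q. A q' k * a0 q') - lam0) / (lam0 * \<eta>)" for k
  define g0 where "g0 q = - a0 q / 2 + t q - (\<Sum>k\<in>Ks. A q k * m0 k)" for q
  define g1 where "g1 q = - a1 q / 2 + t q - (\<Sum>k\<in>Ks. A q k * ms k)" for q
  have l0: "lam0 > 0" using lam by simp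
  have v1: "(\<Sum>q\<in>Q. g0 q * (lam0 * a1 q - lam * a0 q)) \<le> 0"
  proof -
    have "(\<Sum>q\<in>Q. g0 q * (lam0 * a1 q - lam * a0 q)) = lam * (\<Sum>q\<in>Q. g0 q * ((lam0 / lam) * a1 q - a0 q))"
      using lam by (simp add: sum_distrib_left algebra_simps)
    also have "\<dots> \<le> 0" using vi0 lam unfolding g0_def m0_def by (simp add: mult_nonneg_nonpos)
    finally show ?thesis .
  qed
  have v2: "(\<Sum>q\<in>Q. g1 q * (lam * a0 q - lam0 * a1 q)) \<le> 0"
  proof (rule sum_nonpos)
    fix q assume q: "q \<in> Q"
    define z where "z = t q - (\<Sum>j\<in>Ks. ms j * A q j)"
    have a1q: "a1 q = 2 * pos_part z" using a1_def q unfolding z_def by simp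
    have "(\<Sum>k\<in>Ks. A q k * ms k) = (\<Sum>j\<in>Ks. ms j * A q j)" by (simp add: mult.commute)
    then have g1q: "g1 q = - pos_part z + z" unfolding g1_def a1q z_def by simp
    show "g1 q * (lam * a0 q - lam0 * a1 q) \<le> 0"
    proof (cases "z \<ge> 0")
      case True
      then show ?thesis unfolding g1q by (simp add: pos_part_def)
    next
      case False
      then have "g1 q * (lam * a0 q - lam0 * a1 q) = z * (lam * a0 q)"
        unfolding g1q a1q by (simp add: pos_part_def)
      also have "\<dots> \<le> 0" using False lam a0_nn q by (intro mult_nonpos_nonneg) auto
      finally show ?thesis .
    qed
  qed
  define S where "S = (\<Sum>q\<in>Q. (a1 q - a0 q) * (lam0 * a1 q - lam * a0 q))"
  define X where "X = (\<Sum>q\<in>Q. (\<Sum>k\<in>Ks. A q k * (ms k - m0 k)) * (lam0 * a1 q - lam * a0 q))"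
  have X0: "X \<ge> 0"
  proof -
    have "X = (\<Sum>k\<in>Ks. (ms k - m0 k) * (lam0 * (\<Sum>q\<in>Q. A q k * a1 q) - lam * (\<Sum>q\<in>Q. A q k * a0 q)))"
    proof -
      define W where "W q = lam0 * a1 q - lam * a0 q" for q
      have "X = (\<Sum>q\<in>Q. \<Sum>k\<in>Ks. (ms k - m0 k) * (A q k * W q))"
        unfolding X_def W_def sum_distrib_right by (intro sum.cong refl) (simp add: mult_ac)
      also have "\<dots> = (\<Sum>k\<in>Ks. \<Sum>q\<in>Q. (ms k - m0 k) * (A q k * W q))" by (rule sum.swap)
      also have "\<dots> = (\<Sum>k\<in>Ks. (ms k - m0 k) * (\<Sum>q\<in>Q. A q k * W q))" by (simp add: sum_distrib_left)
      also have "\<dots> = (\<Sum>k\<in>Ks. (ms k - m0 k) * (lam0 * (\<Sum>q\<in>Q. A q k * a1 q) - lam * (\<Sum>q\<in>Q. A q k * a0 q)))"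
        unfolding W_def by (simp add: right_diff_distrib sum_subtractf sum_distrib_left mult_ac)
      finally show ?thesis .
    qed
    also have "\<dots> \<ge> 0"
    proof (rule sum_nonneg)
      fix k assume k: "k \<in> Ks"
      show "0 \<le> (ms k - m0 k) * (lam0 * (\<Sum>q\<in>Q. A q k * a1 q) - lam * (\<Sum>q\<in>Q. A q k * a0 q))"
        unfolding m0_def
        by (rule cross_term) (use lam eta ms_nn kkt1 kkt2 k in auto)
    qed
    finally show ?thesis .
  qed
  have "S / 2 + X = (\<Sum>q\<in>Q. (a1 q - a0 q) * (lam0 * a1 q - lam * a0 q) / 2
       + (\<Sum>k\<in>Ks. A q k * (ms k - m0 k)) * (lam0 * a1 q - lam * a0 q))"
    unfolding S_def X_def by (simp add: sum_divide_distrib sum.distrib)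
  also have "\<dots> = (\<Sum>q\<in>Q. g0 q * (lam0 * a1 q - lam * a0 q) + g1 q * (lam * a0 q - lam0 * a1 q))"
  proof (rule sum.cong[OF refl])
    fix q
    have i: "(\<Sum>k\<in>Ks. A q k * (ms k - m0 k)) = (\<Sum>k\<in>Ks. A q k * ms k) - (\<Sum>k\<in>Ks. A q k * m0 k)"
      by (simp add: right_diff_distrib sum_subtractf)
    show "(a1 q - a0 q) * (lam0 * a1 q - lam * a0 q) / 2
       + (\<Sum>k\<in>Ks. A q k * (ms k - m0 k)) * (lam0 * a1 q - lam * a0 q)
       = g0 q * (lam0 * a1 q - lam * a0 q) + g1 q * (lam * a0 q - lam0 * a1 q)"
      unfolding i g0_def g1_def by (simp add: algebra_simps add_divide_distrib diff_divide_distrib)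
  qed
  also have "\<dots> = (\<Sum>q\<in>Q. g0 q * (lam0 * a1 q - lam * a0 q)) + (\<Sum>q\<in>Q. g1 q * (lam * a0 q - lam0 * a1 q))"
    by (rule sum.distrib)
  finally have "S / 2 + X = \<dots>" .
  with v1 v2 X0 have S0: "S \<le> 0" by linarith
  have "(\<Sum>q\<in>Q. (a1 q - (lam0 + lam) / (2 * lam0) * a0 q)\<^sup>2) - ((lam0 - lam) / (2 * lam0))\<^sup>2 * (\<Sum>q\<in>Q. (a0 q)\<^sup>2)
      = (\<Sum>q\<in>Q. (a1 q - (lam0 + lam) / (2 * lam0) * a0 q)\<^sup>2 - ((lam0 - lam) / (2 * lam0))\<^sup>2 * (a0 q)\<^sup>2)"
    by (simp add: sum_subtractf sum_distrib_left)
  also have "\<dots> = (\<Sum>q\<in>Q. (a1 q - a0 q) * (lam0 * a1 q - lam * a0 q) / lam0)"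
    by (rule sum.cong) (use l0 in \<open>auto simp: field_simps power2_eq_square\<close>)
  also have "\<dots> = S / lam0" unfolding S_def by (simp add: sum_divide_distrib)
  also have "\<dots> \<le> 0" using S0 l0 by (simp add: divide_nonpos_pos)
  finally show ?thesis by simp
qed




lemma finite_pair_idx:
  assumes "\<And>i. i \<in> {1..n} \<Longrightarrow> finite (D i)" "\<And>i. i \<in> {1..n} \<Longrightarrow> finite (S i)"
  shows "finite (pair_idx n D S)"
  unfolding pair_idx_def using assms by (intro finite_UnI finite_imageI finite_SigmaI) auto



lemma pair_idx_mem:
  assumes "q \<in> pair_idx n D S" "\<And>i. i \<in> {1..n} \<Longrightarrow> D i \<subseteq> {1..n}" "\<And>i. i \<in> {1..n} \<Longrightarrow> S i \<subseteq> {1..n}"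
  obtains bb i j where "q = (bb, i, j)" "i \<in> {1..n}" "j \<in> {1..n}"
proof -
  from assms(1) consider (a) "q \<in> (\<lambda>(i,l). (True,i,l)) ` (SIGMA i:{1..n}. D i)"
    | (b) "q \<in> (\<lambda>(i,l). (False,i,l)) ` (SIGMA i:{1..n}. S i)"
    unfolding pair_idx_def by blast
  then show ?thesis
  proof cases
    case a
    then obtain i l where "i \<in> {1..n}" "l \<in> D i" "q = (True, i, l)" by auto
    then show ?thesis using that assms(2) by blast
  next
    case b
    then obtain i l where "i \<in> {1..n}" "l \<in> S i" "q = (False, i, l)" by auto
    then show ?thesis using that assms(3) by blast
  qed
qed


lemma Pobj_eq:
  assumes "\<And>i. i \<in> {1..n} \<Longrightarrow> finite (D i)" "\<And>i. i \<in> {1..n} \<Longrightarrow> finite (S i)"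
  shows "Pobj n p x D S L U \<eta> lam m = (\<Sum>q\<in>pair_idx n D S. (pos_part (tvec L U q - (\<Sum>j\<in>{1..p}. m j * Ccol x q j)))\<^sup>2)
     + lam * ((\<Sum>j\<in>{1..p}. m j) + \<eta>/2 * (\<Sum>j\<in>{1..p}. (m j)\<^sup>2))"
proof -
  have "(\<Sum>q\<in>pair_idx n D S. (pos_part (tvec L U q - (\<Sum>j\<in>{1..p}. m j * Ccol x q j)))\<^sup>2)
    = (\<Sum>i\<in>{1..n}. (\<Sum>l\<in>D i. ell L (mdot p m x i l)) + (\<Sum>j\<in>S i. ell (- U) (- mdot p m x i j)))"
  proof -
    have 1: "(\<Sum>j\<in>{1..p}. m j * Ccol x (True, i, l) j) = mdot p m x i l" for i l
      unfolding mdot_def Ccol_def by simp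
    have 2: "(\<Sum>j'\<in>{1..p}. m j' * Ccol x (False, i, j) j') = - mdot p m x i j" for i j
      unfolding mdot_def Ccol_def by (simp add: sum_negf)
    have sp: "sum F (pair_idx n D S) = (\<Sum>i\<in>{1..n}. (\<Sum>l\<in>D i. F (True,i,l)) + (\<Sum>j\<in>S i. F (False,i,j)))" for F
      by (rule sum_pair[OF assms])
    show ?thesis
      unfolding sp 1 2 by (simp add: ell_def tvec_def)
  qed
  then show ?thesis unfolding Pobj_def by simp
qed



lemma Dobj_eq:
  assumes "lam * \<eta> \<noteq> 0"
  shows "Dobj n p x D S L U \<eta> lam \<alpha> = - 1/4 * (\<Sum>q\<in>pair_idx n D S. (\<alpha> q)\<^sup>2) + (\<Sum>q\<in>pair_idx n D S. tvec L U q * \<alpha> q)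
      - 1 / (2 * lam * \<eta>) * (\<Sum>k\<in>{1..p}. (pos_part ((\<Sum>q\<in>pair_idx n D S. Ccol x q k * \<alpha> q) - lam))\<^sup>2)"
proof -
  have d: "(dnorm n D S \<alpha>)\<^sup>2 = (\<Sum>q\<in>pair_idx n D S. (\<alpha> q)\<^sup>2)"
    unfolding dnorm_def by (simp add: sum_nonneg)
  have e: "lam * \<eta> / 2 * (\<Sum>k\<in>{1..p}. (1 / (lam * \<eta>) * pos_part (Cmul n x D S \<alpha> k - lam))\<^sup>2)
      = 1 / (2 * lam * \<eta>) * (\<Sum>k\<in>{1..p}. (pos_part ((\<Sum>q\<in>pair_idx n D S. Ccol x q k * \<alpha> q) - lam))\<^sup>2)"
  proof -
    have *: "lam * \<eta> / 2 * (1 / (lam * \<eta>) * P)\<^sup>2 = 1 / (2 * lam * \<eta>) * P\<^sup>2" for P :: real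
      using assms by (simp add: power2_eq_square)
    show ?thesis unfolding Cmul_def sum_distrib_left * ..
  qed
  show ?thesis unfolding Dobj_def d e ..
qed



lemma sq_diff_le:
  fixes u w U W :: real
  assumes "0 \<le> u" "u \<le> U" "0 \<le> w" "w \<le> W"
  shows "(u - w)\<^sup>2 \<le> (max U W)\<^sup>2"
proof -
  have "\<bar>u - w\<bar> \<le> max U W" using assms by auto
  then have "\<bar>u - w\<bar>\<^sup>2 \<le> (max U W)\<^sup>2" by (intro power_mono) auto
  then show ?thesis by simp
qed



theorem theorem7:
  fixes n K p :: nat and x :: "nat \<Rightarrow> nat \<Rightarrow> real" and D S :: "nat \<Rightarrow> nat set"
    and L U \<eta> lam lam0 \<epsilon> :: real
    and \<alpha>0 \<alpha>0s :: "bool \<times> nat \<times> nat \<Rightarrow> real" and ms :: "nat \<Rightarrow> real"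
    and desc :: "nat \<Rightarrow> nat \<Rightarrow> bool" and k :: nat
  assumes "1 \<le> n" "1 \<le> K" "1 \<le> p"
    and x_nonneg: "\<And>i k. i \<in> {1..n} \<Longrightarrow> k \<in> {1..p} \<Longrightarrow> 0 \<le> x i k"
    and D_sub: "\<And>i. i \<in> {1..n} \<Longrightarrow> D i \<subseteq> {1..n} \<and> card (D i) = K"
    and S_sub: "\<And>i. i \<in> {1..n} \<Longrightarrow> S i \<subseteq> {1..n} \<and> card (S i) = K"
    and "U \<le> L" "0 \<le> U" "0 < \<eta>"
    and desc_dom: "\<And>k1 k2. desc k1 k2 \<Longrightarrow> k1 \<in> {1..p} \<and> k2 \<in> {1..p}"
    and desc_mono: "\<And>k1 k2 i. desc k1 k2 \<Longrightarrow> i \<in> {1..n} \<Longrightarrow> 0 \<le> x i k1 \<and> x i k1 \<le> x i k2"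
    and "0 < lam" "lam \<le> lam0"
    and dual_opt: "dual_feasible n D S \<alpha>0s"
      "\<And>\<alpha>. dual_feasible n D S \<alpha> \<Longrightarrow> Dobj n p x D S L U \<eta> lam0 \<alpha> \<le> Dobj n p x D S L U \<eta> lam0 \<alpha>0s"
    and "dual_feasible n D S \<alpha>0" "0 \<le> \<epsilon>"
    and "dnorm n D S (\<lambda>q. \<alpha>0 q - \<alpha>0s q) \<le> \<epsilon>"
    and primal_opt: "primal_feasible p ms"
      "\<And>m. primal_feasible p m \<Longrightarrow> Pobj n p x D S L U \<eta> lam ms \<le> Pobj n p x D S L U \<eta> lam m"
    and "k \<in> {1..p}"
    and "let a = (\<Sum>i\<in>{1..n}. \<Sum>l\<in>D i. \<alpha>0 (True, i, l) * (max (x l k) (x i k))\<^sup>2);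
             b = sqrt (\<Sum>i\<in>{1..n}. (\<Sum>l\<in>D i. (max (x i k) (x l k)) ^ 4) + (\<Sum>j\<in>S i. (max (x i k) (x j k)) ^ 4));
             lama = lam0 * (2 * \<epsilon> * b + dnorm n D S \<alpha>0 * b + a) / (2 * lam0 + dnorm n D S \<alpha>0 * b - a)
         in lama \<le> lam"
  shows "\<forall>k'. desc k' k \<longrightarrow> ms k' = 0"
  proof -
  define Q where "Q = pair_idx n D S"
  define A where "A = Ccol x"
  define t where "t = tvec L U"
  have finD: "\<And>i. i \<in> {1..n} \<Longrightarrow> finite (D i)" using D_sub finite_subset by blast
  have finS: "\<And>i. i \<in> {1..n} \<Longrightarrow> finite (S i)" using S_sub finite_subset by blast
  have finQ: "finite Q" unfolding Q_def by (rule finite_pair_idx[OF finD finS])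
  have finK: "finite {1..p}" by simp
  have lam: "0 < lam" "lam \<le> lam0" using assms(12,13) by auto
  have lam0: "0 < lam0" using lam by simp
  have eta: "0 < \<eta>" using assms(9) .
  have ms_nn: "\<forall>j\<in>{1..p}. 0 \<le> ms j" and ms_z: "\<forall>j. j \<notin> {1..p} \<longrightarrow> ms j = 0"
    using primal_opt(1) unfolding primal_feasible_def by auto
  define a1 where "a1 q = (if q \<in> Q then 2 * pos_part (t q - (\<Sum>j\<in>{1..p}. ms j * A q j)) else 0)" for q
  have a1_def': "\<forall>q\<in>Q. a1 q = 2 * pos_part (t q - (\<Sum>j\<in>{1..p}. ms j * A q j))" by (simp add: a1_def)
  have a1_nn: "\<forall>q\<in>Q. 0 \<le> a1 q" by (simp add: a1_def pos_part_def)
  have a1_z: "\<forall>q. q \<notin> Q \<longrightarrow> a1 q = 0" by (simp add: a1_def)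
  have popt: "(\<Sum>q\<in>Q. (pos_part (t q - (\<Sum>j\<in>{1..p}. ms j * A q j)))\<^sup>2) + lam * ((\<Sum>j\<in>{1..p}. ms j) + \<eta>/2 * (\<Sum>j\<in>{1..p}. (ms j)\<^sup>2))
     \<le> (\<Sum>q\<in>Q. (pos_part (t q - (\<Sum>j\<in>{1..p}. m j * A q j)))\<^sup>2) + lam * ((\<Sum>j\<in>{1..p}. m j) + \<eta>/2 * (\<Sum>j\<in>{1..p}. (m j)\<^sup>2))"
    if "\<forall>j\<in>{1..p}. 0 \<le> m j" "\<forall>j. j \<notin> {1..p} \<longrightarrow> m j = 0" for m
  proof -
    have "Pobj n p x D S L U \<eta> lam ms \<le> Pobj n p x D S L U \<eta> lam m"
      using primal_opt(2)[of m] that unfolding primal_feasible_def by auto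
    then show ?thesis unfolding Q_def A_def t_def by (simp only: Pobj_eq[OF finD finS])
  qed
  have kkt1: "\<forall>k\<in>{1..p}. (\<Sum>q\<in>Q. A q k * a1 q) \<le> lam * (1 + \<eta> * ms k)"
    and kkt2: "\<forall>k\<in>{1..p}. ms k > 0 \<longrightarrow> (\<Sum>q\<in>Q. A q k * a1 q) \<ge> lam * (1 + \<eta> * ms k)"
  proof -
    have eqa: "(\<Sum>q\<in>Q. A q k * a1 q) = (\<Sum>q\<in>Q. A q k * (2 * pos_part (t q - (\<Sum>j\<in>{1..p}. ms j * A q j))))" for k
      by (rule sum.cong) (auto simp: a1_def)
    show "\<forall>k\<in>{1..p}. (\<Sum>q\<in>Q. A q k * a1 q) \<le> lam * (1 + \<eta> * ms k)"
      unfolding eqa using primal_kkt(1)[OF finQ finK _ lam(1) eta ms_nn ms_z popt] by blast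
    show "\<forall>k\<in>{1..p}. ms k > 0 \<longrightarrow> (\<Sum>q\<in>Q. A q k * a1 q) \<ge> lam * (1 + \<eta> * ms k)"
      unfolding eqa using primal_kkt(2)[OF finQ finK _ lam(1) eta ms_nn ms_z popt] by blast
  qed
  have a0s_nn: "\<forall>q\<in>Q. 0 \<le> \<alpha>0s q" and a0s_z: "\<forall>q. q \<notin> Q \<longrightarrow> \<alpha>0s q = 0"
    using dual_opt(1) unfolding dual_feasible_def Q_def by auto
  have a0_nn: "\<forall>q\<in>Q. 0 \<le> \<alpha>0 q"
    using assms(16) unfolding dual_feasible_def Q_def by auto
  have l0e: "lam0 * \<eta> \<noteq> 0" using lam0 eta by simp
  have dopt: "- 1/4 * (\<Sum>q\<in>Q. (\<alpha> q)\<^sup>2) + (\<Sum>q\<in>Q. t q * \<alpha> q)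
      - 1 / (2 * lam0 * \<eta>) * (\<Sum>k\<in>{1..p}. (pos_part ((\<Sum>q\<in>Q. A q k * \<alpha> q) - lam0))\<^sup>2)
    \<le> - 1/4 * (\<Sum>q\<in>Q. (\<alpha>0s q)\<^sup>2) + (\<Sum>q\<in>Q. t q * \<alpha>0s q)
      - 1 / (2 * lam0 * \<eta>) * (\<Sum>k\<in>{1..p}. (pos_part ((\<Sum>q\<in>Q. A q k * \<alpha>0s q) - lam0))\<^sup>2)"
    if "\<forall>q\<in>Q. 0 \<le> \<alpha> q" "\<forall>q. q \<notin> Q \<longrightarrow> \<alpha> q = 0" for \<alpha>
  proof -
    have "Dobj n p x D S L U \<eta> lam0 \<alpha> \<le> Dobj n p x D S L U \<eta> lam0 \<alpha>0s"
      using dual_opt(2)[of \<alpha>] that unfolding dual_feasible_def Q_def by auto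
    then show ?thesis unfolding Q_def A_def t_def by (simp only: Dobj_eq[OF l0e])
  qed
  have b_nn: "\<forall>q\<in>Q. 0 \<le> (lam0 / lam) * a1 q" using a1_nn lam by simp
  have b_z: "\<forall>q. q \<notin> Q \<longrightarrow> (lam0 / lam) * a1 q = 0" using a1_z by simp
  have vi0: "(\<Sum>q\<in>Q. (- \<alpha>0s q / 2 + t q - (\<Sum>k\<in>{1..p}. A q k * (pos_part ((\<Sum>q'\<in>Q. A q' k * \<alpha>0s q') - lam0) / (lam0 * \<eta>))))
           * ((lam0 / lam) * a1 q - \<alpha>0s q)) \<le> 0"
    by (rule dual_vi[OF finQ finK lam0 eta a0s_nn a0s_z b_nn b_z dopt])
  define c where "c = (lam0 + lam) / (2 * lam0)"
  define r where "r = (lam0 - lam) / (2 * lam0)"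
  have c0: "c \<ge> 0" and r0: "r \<ge> 0" using lam unfolding c_def r_def by auto
  have rb: "(\<Sum>q\<in>Q. (a1 q - c * \<alpha>0s q)\<^sup>2) \<le> r\<^sup>2 * (\<Sum>q\<in>Q. (\<alpha>0s q)\<^sup>2)"
    unfolding c_def r_def by (rule rpb[OF finQ finK lam eta a0s_nn vi0 a1_def' ms_nn kkt1 kkt2])
  define N where "N = dnorm n D S \<alpha>0"
  have N_eq: "N = L2_set \<alpha>0 Q" unfolding N_def dnorm_def L2_set_def Q_def ..
  have E1: "L2_set (\<lambda>q. a1 q - c * \<alpha>0s q) Q \<le> r * L2_set \<alpha>0s Q"
  proof -
    have "L2_set (\<lambda>q. a1 q - c * \<alpha>0s q) Q \<le> sqrt (r\<^sup>2 * (\<Sum>q\<in>Q. (\<alpha>0s q)\<^sup>2))"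
      unfolding L2_set_def using rb by simp
    also have "\<dots> = r * L2_set \<alpha>0s Q" unfolding L2_set_def using r0 by (simp add: real_sqrt_mult)
    finally show ?thesis .
  qed
  have E2: "L2_set (\<lambda>q. \<alpha>0s q - \<alpha>0 q) Q \<le> \<epsilon>"
  proof -
    have "L2_set (\<lambda>q. \<alpha>0s q - \<alpha>0 q) Q = dnorm n D S (\<lambda>q. \<alpha>0 q - \<alpha>0s q)"
      unfolding dnorm_def L2_set_def Q_def by (simp add: power2_commute)
    then show ?thesis using assms(18) by simp
  qed
  have E3: "L2_set \<alpha>0s Q \<le> N + \<epsilon>"
  proof -
    have "L2_set \<alpha>0s Q = L2_set (\<lambda>q. \<alpha>0 q + (\<alpha>0s q - \<alpha>0 q)) Q" by simp
    also have "\<dots> \<le> L2_set \<alpha>0 Q + L2_set (\<lambda>q. \<alpha>0s q - \<alpha>0 q) Q" by (rule L2_set_triangle_ineq)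
    finally show ?thesis using E2 N_eq by simp
  qed
  have E4: "L2_set (\<lambda>q. a1 q - c * \<alpha>0 q) Q \<le> r * (N + \<epsilon>) + c * \<epsilon>"
  proof -
    have "L2_set (\<lambda>q. a1 q - c * \<alpha>0 q) Q = L2_set (\<lambda>q. (a1 q - c * \<alpha>0s q) + c * (\<alpha>0s q - \<alpha>0 q)) Q"
      by (simp add: algebra_simps)
    also have "\<dots> \<le> L2_set (\<lambda>q. a1 q - c * \<alpha>0s q) Q + L2_set (\<lambda>q. c * (\<alpha>0s q - \<alpha>0 q)) Q"
      by (rule L2_set_triangle_ineq)
    also have "L2_set (\<lambda>q. c * (\<alpha>0s q - \<alpha>0 q)) Q = c * L2_set (\<lambda>q. \<alpha>0s q - \<alpha>0 q) Q"
      by (rule L2_set_right_distrib[OF c0, symmetric])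
    also have "L2_set (\<lambda>q. a1 q - c * \<alpha>0s q) Q + c * L2_set (\<lambda>q. \<alpha>0s q - \<alpha>0 q) Q \<le> r * (N + \<epsilon>) + c * \<epsilon>"
      using E1 E2 E3 r0 c0 by (meson add_mono mult_left_mono order_trans)
    finally show ?thesis .
  qed
  define M where "M q = (case q of (bb::bool, i, j) \<Rightarrow> (max (x i k) (x j k))\<^sup>2)" for q
  define a where "a = (\<Sum>i\<in>{1..n}. \<Sum>l\<in>D i. \<alpha>0 (True, i, l) * (max (x l k) (x i k))\<^sup>2)"
  define b where "b = sqrt (\<Sum>i\<in>{1..n}. (\<Sum>l\<in>D i. (max (x i k) (x l k)) ^ 4) + (\<Sum>j\<in>S i. (max (x i k) (x j k)) ^ 4))"
  have sp: "sum F Q = (\<Sum>i\<in>{1..n}. (\<Sum>l\<in>D i. F (True,i,l)) + (\<Sum>j\<in>S i. F (False,i,j)))" for F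
    unfolding Q_def by (rule sum_pair[OF finD finS])
  have b_eq: "b = L2_set M Q"
  proof -
    have "(M q)\<^sup>2 = (case q of (bb, i, j) \<Rightarrow> (max (x i k) (x j k)) ^ 4)" for q
      unfolding M_def by (cases q) auto
    then show ?thesis unfolding b_def L2_set_def sp by simp
  qed
  have a_eq: "a = (\<Sum>q\<in>Q. if fst q then \<alpha>0 q * M q else 0)"
    unfolding a_def sp M_def by (simp add: max.commute)
  have b0: "b \<ge> 0" unfolding b_eq by simp
  have N0: "N \<ge> 0" unfolding N_eq by simp
  have M0: "\<forall>q. 0 \<le> M q" unfolding M_def by (auto split: prod.splits)
  have aNb: "a \<le> N * b"
  proof -
    have "a \<le> (\<Sum>q\<in>Q. \<bar>\<alpha>0 q\<bar> * \<bar>M q\<bar>)"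
      unfolding a_eq by (rule sum_mono) (use a0_nn M0 in auto)
    also have "\<dots> \<le> L2_set \<alpha>0 Q * L2_set M Q" by (rule L2_set_mult_ineq)
    finally show ?thesis unfolding N_eq b_eq .
  qed
  have hyp: "lam0 * (2 * \<epsilon> * b + N * b + a) / (2 * lam0 + N * b - a) \<le> lam"
    using assms(22) unfolding Let_def a_def b_def N_def .
  have den: "2 * lam0 + N * b - a > 0" using aNb lam0 by linarith
  have hyp2: "lam0 * (2 * \<epsilon> * b + N * b + a) \<le> lam * (2 * lam0 + N * b - a)"
    using hyp den by (simp add: pos_divide_le_eq)
  have fin_ineq: "c * a + b * (r * (N + \<epsilon>) + c * \<epsilon>) \<le> lam"
  proof -
    have "2 * lam0 * (c * a + b * (r * (N + \<epsilon>) + c * \<epsilon>)) = (lam0 + lam) * a + (lam0 - lam) * N * b + 2 * lam0 * \<epsilon> * b"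
      unfolding c_def r_def using lam0 by (simp add: field_simps)
    also have "\<dots> \<le> 2 * lam0 * lam" using hyp2 by (simp add: algebra_simps)
    finally show ?thesis using lam0 by simp
  qed
  show ?thesis
  proof (intro allI impI)
    fix k' assume dk: "desc k' k"
    have k'p: "k' \<in> {1..p}" using desc_dom[OF dk] by simp
    have perq: "\<bar>A q k'\<bar> \<le> M q \<and> A q k' * \<alpha>0 q \<le> (if fst q then \<alpha>0 q * M q else 0)" if q: "q \<in> Q" for q
    proof -
      obtain bb i j where qe: "q = (bb, i, j)" and ij: "i \<in> {1..n}" "j \<in> {1..n}"
        using pair_idx_mem[of q n D S] q D_sub S_sub unfolding Q_def by blast
      have cv: "cvec x i j k' \<le> M q" "0 \<le> cvec x i j k'"
        unfolding cvec_def M_def qe using sq_diff_le[of "x i k'" "x i k" "x j k'" "x j k"] desc_mono[OF dk ij(1)] desc_mono[OF dk ij(2)]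
        by (auto simp: power2_eq_square)
      have "0 \<le> \<alpha>0 q" using a0_nn q by simp
      then show ?thesis using cv unfolding A_def Ccol_def qe
        by (cases bb) (auto intro: mult_right_mono simp: mult.commute mult_nonneg_nonneg)
    qed
    have T1: "(\<Sum>q\<in>Q. A q k' * \<alpha>0 q) \<le> a"
      unfolding a_eq by (rule sum_mono) (use perq in blast)
    have LA: "L2_set (\<lambda>q. A q k') Q \<le> b"
    proof -
      have "L2_set (\<lambda>q. A q k') Q = L2_set (\<lambda>q. \<bar>A q k'\<bar>) Q" unfolding L2_set_def by simp
      also have "\<dots> \<le> L2_set M Q" by (rule L2_set_mono) (use perq in auto)
      finally show ?thesis unfolding b_eq .
    qed
    have T2: "(\<Sum>q\<in>Q. A q k' * (a1 q - c * \<alpha>0 q)) \<le> b * (r * (N + \<epsilon>) + c * \<epsilon>)"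
    proof -
      have "(\<Sum>q\<in>Q. A q k' * (a1 q - c * \<alpha>0 q)) \<le> (\<Sum>q\<in>Q. \<bar>A q k'\<bar> * \<bar>a1 q - c * \<alpha>0 q\<bar>)"
        by (rule sum_mono) (metis abs_ge_self abs_mult)
      also have "\<dots> \<le> L2_set (\<lambda>q. A q k') Q * L2_set (\<lambda>q. a1 q - c * \<alpha>0 q) Q" by (rule L2_set_mult_ineq)
      also have "\<dots> \<le> b * (r * (N + \<epsilon>) + c * \<epsilon>)"
        using LA E4 b0 by (intro mult_mono) auto
      finally show ?thesis .
    qed
    have c1: "(\<Sum>q\<in>Q. A q k' * a1 q) = c * (\<Sum>q\<in>Q. A q k' * \<alpha>0 q) + (\<Sum>q\<in>Q. A q k' * (a1 q - c * \<alpha>0 q))"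
      by (simp add: sum_distrib_left sum.distrib[symmetric] algebra_simps)
    have "(\<Sum>q\<in>Q. A q k' * a1 q) \<le> c * a + b * (r * (N + \<epsilon>) + c * \<epsilon>)"
      unfolding c1 using T1 T2 c0 by (meson add_mono mult_left_mono)
    with fin_ineq have up: "(\<Sum>q\<in>Q. A q k' * a1 q) \<le> lam" by linarith
    show "ms k' = 0"
    proof (rule ccontr)
      assume "ms k' \<noteq> 0"
      with ms_nn k'p have pos: "ms k' > 0" by force
      have "lam * (1 + \<eta> * ms k') \<le> lam" using kkt2 k'p pos up by force
      moreover have "lam * (1 + \<eta> * ms k') > lam" using lam eta pos by simp
      ultimately show False by simp
    qed
  qed
qed


end
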